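(* Let $G$ be a simple graph and let $K_{s_1},K_{s_2},\ldots,K_{s_k}$ be pairwise edge-disjoint cliques (complete subgraphs) of $G$ with $s_i\ge 3$ for all $i$. Then the independence number of the triangular signed graph $G_{\vartriangle}$ satisfies $$\alpha(G_{\vartriangle})\ge\sum_{i=1}^{k}\frac{\binom{s_i}{3}}{1+3(s_i-3)}.$$
   Context: Edges of $G$ are oriented and each triangle $\vartriangle$ of $G$ is given a cyclic orientation. The triangular signed graph $G_{\vartriangle}$ has the triangles of $G$ as vertices; two distinct triangles are adjacent if and only if they share an edge $e$ (the edge being positive if $e$ agrees with the orientations of both triangles or disagrees with both, and negative otherwise). The independence number $\alpha(G_{\vartriangle})$ is that of the underlying unsigned graph. *)

theory Defs
  imports Complex_Main
begin

definition simple_graph :: "'a set \<Rightarrow> ('a \<Rightarrow> 'a \<Rightarrow> bool) \<Rightarrow> bool" where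
  "simple_graph V E \<longleftrightarrow> finite V \<and> (\<forall>x y. E x y \<longrightarrow> x \<in> V \<and> y \<in> V)
     \<and> (\<forall>x y. E x y \<longrightarrow> E y x) \<and> (\<forall>x. \<not> E x x)"

definition is_clique :: "'a set \<Rightarrow> ('a \<Rightarrow> 'a \<Rightarrow> bool) \<Rightarrow> 'a set \<Rightarrow> bool" where
  "is_clique V E K \<longleftrightarrow> K \<subseteq> V \<and> (\<forall>x\<in>K. \<forall>y\<in>K. x \<noteq> y \<longrightarrow> E x y)"

definition clique_edges :: "'a set \<Rightarrow> 'a set set" where
  "clique_edges K = {e. e \<subseteq> K \<and> card e = 2}"

definition triangles :: "'a set \<Rightarrow> ('a \<Rightarrow> 'a \<Rightarrow> bool) \<Rightarrow> 'a set set" where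
  "triangles V E = {T. T \<subseteq> V \<and> card T = 3 \<and> (\<forall>x\<in>T. \<forall>y\<in>T. x \<noteq> y \<longrightarrow> E x y)}"

text \<open>Adjacency in the underlying unsigned graph of the triangular signed graph:
  two distinct triangles sharing an edge.\<close>
definition tri_adj :: "'a set \<Rightarrow> ('a \<Rightarrow> 'a \<Rightarrow> bool) \<Rightarrow> 'a set \<Rightarrow> 'a set \<Rightarrow> bool" where
  "tri_adj V E T1 T2 \<longleftrightarrow> T1 \<in> triangles V E \<and> T2 \<in> triangles V E \<and> T1 \<noteq> T2
     \<and> (\<exists>e. e \<subseteq> T1 \<inter> T2 \<and> card e = 2 \<and> (\<forall>x\<in>e. \<forall>y\<in>e. x \<noteq> y \<longrightarrow> E x y))"

definition tri_independent :: "'a set \<Rightarrow> ('a \<Rightarrow> 'a \<Rightarrow> bool) \<Rightarrow> 'a set set \<Rightarrow> bool" where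
  "tri_independent V E S \<longleftrightarrow> S \<subseteq> triangles V E \<and> (\<forall>T1\<in>S. \<forall>T2\<in>S. \<not> tri_adj V E T1 T2)"

definition tri_alpha :: "'a set \<Rightarrow> ('a \<Rightarrow> 'a \<Rightarrow> bool) \<Rightarrow> nat" where
  "tri_alpha V E = Max {card S | S. tri_independent V E S}"

end

theory Submission
  imports Defs
begin

lemma greedy_indep:
  fixes R :: "'b \<Rightarrow> 'b \<Rightarrow> bool"
  assumes "finite X" and "\<And>x y. R x y \<Longrightarrow> R y x" and "\<And>x. \<not> R x x"
    and "\<And>x. x \<in> X \<Longrightarrow> card {y\<in>X. R x y} \<le> d"
  shows "\<exists>S\<subseteq>X. (\<forall>a\<in>S. \<forall>b\<in>S. \<not> R a b) \<and> card X \<le> (d+1) * card S"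
  using assms(1,4)
proof (induction X rule: finite_psubset_induct)
  case (psubset X)
  show ?case
  proof (cases "X = {}")
    case True then show ?thesis by auto
  next
    case False
    then obtain x where x: "x \<in> X" by auto
    define N where "N = insert x {y\<in>X. R x y}"
    have NX: "N \<subseteq> X" using x by (auto simp: N_def)
    have fN: "finite N" using NX psubset(1) finite_subset by blast
    have cN: "card N \<le> d + 1"
    proof -
      have fR: "finite {y\<in>X. R x y}" using psubset(1) by simp
      have "card N \<le> Suc (card {y\<in>X. R x y})" unfolding N_def using fR by (simp add: card_insert_if)
      then show ?thesis using psubset(3)[OF x] by simp
    qed
    have sub: "X - N \<subset> X" using x by (auto simp: N_def)
    have "\<And>z. z \<in> X - N \<Longrightarrow> card {y\<in>X - N. R z y} \<le> d"
    proof -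
      fix z assume z: "z \<in> X - N"
      have "card {y\<in>X - N. R z y} \<le> card {y\<in>X. R z y}"
        by (rule card_mono) (use psubset(1) in auto)
      then show "card {y\<in>X - N. R z y} \<le> d" using psubset(3)[of z] z by auto
    qed
    from psubset(2)[OF sub this] obtain S where
      S: "S \<subseteq> X - N" "\<forall>a\<in>S. \<forall>b\<in>S. \<not> R a b" "card (X - N) \<le> (d+1) * card S"
      by blast
    have xS: "x \<notin> S" using S(1) by (auto simp: N_def)
    have fS: "finite S" using S(1) psubset(1) finite_subset by blast
    have ind: "\<forall>a\<in>insert x S. \<forall>b\<in>insert x S. \<not> R a b"
      using S(1,2) assms(2,3) by (auto simp: N_def)
    have "card X = card (X - N) + card N"
      using NX psubset(1) by (metis card_Diff_subset fN card_mono le_add_diff_inverse2)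
    also have "\<dots> \<le> (d+1) * card S + (d+1)" using S(3) cN by linarith
    also have "\<dots> = (d+1) * card (insert x S)" using xS fS by simp
    finally show ?thesis using ind S(1) x by (intro exI[of _ "insert x S"]) auto
  qed
qed

lemma neighbours_bound:
  assumes "finite K" and "T \<subseteq> K" and "card T = 3"
  shows "card {T'\<in>{B. B \<subseteq> K \<and> card B = 3}. T' \<noteq> T \<and>
            (\<exists>e. e \<subseteq> T \<inter> T' \<and> card e = 2)} \<le> 3 * (card K - 3)"
proof -
  let ?A = "{e. e \<subseteq> T \<and> card e = 2} \<times> (K - T)"
  have fT: "finite T" using assms finite_subset by blast
  have sub: "{T'\<in>{B. B \<subseteq> K \<and> card B = 3}. T' \<noteq> T \<and> (\<exists>e. e \<subseteq> T \<inter> T' \<and> card e = 2)}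
        \<subseteq> (\<lambda>(e,v). insert v e) ` ?A"
  proof
    fix T' assume "T' \<in> {T'\<in>{B. B \<subseteq> K \<and> card B = 3}. T' \<noteq> T \<and> (\<exists>e. e \<subseteq> T \<inter> T' \<and> card e = 2)}"
    then obtain e where T': "T' \<subseteq> K" "card T' = 3" "T' \<noteq> T" "e \<subseteq> T \<inter> T'" "card e = 2" by auto
    have fT': "finite T'" using T' assms finite_subset by blast
    have eT': "e \<subseteq> T'" using T' by auto
    have fe: "finite e" using eT' fT' finite_subset by blast
    have "card (T' - e) = card T' - card e" using fe eT' by (rule card_Diff_subset)
    then have "card (T' - e) = 1" using T' by simp
    then obtain v where v: "T' - e = {v}" using card_1_singletonE by blast
    have T'eq: "T' = insert v e" using v T'(4) by blast
    have "v \<notin> T"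
    proof
      assume "v \<in> T"
      then have "T' \<subseteq> T" using T'eq T'(4) by auto
      then have "T' = T" using T'(2) assms(3) fT card_subset_eq by metis
      then show False using T'(3) by simp
    qed
    then have "(e, v) \<in> ?A" using T' v by auto
    then show "T' \<in> (\<lambda>(e,v). insert v e) ` ?A" using T'eq by force
  qed
  have "card {T'\<in>{B. B \<subseteq> K \<and> card B = 3}. T' \<noteq> T \<and> (\<exists>e. e \<subseteq> T \<inter> T' \<and> card e = 2)}
      \<le> card ((\<lambda>(e,v). insert v e) ` ?A)"
    by (rule card_mono[OF _ sub]) (use assms fT in auto)
  also have "\<dots> \<le> card ?A" by (rule card_image_le) (use assms fT in auto)
  also have "\<dots> = (card T choose 2) * card (K - T)"
    using n_subsets[OF fT, of 2] by (simp add: card_cartesian_product)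
  also have "\<dots> = 3 * (card K - 3)" using assms fT
  proof -
    have c32: "(3::nat) choose 2 = 3" by (simp add: choose_two)
    show ?thesis using assms fT c32 by (simp add: card_Diff_subset)
  qed
  finally show ?thesis .
qed

theorem lemma5p7:
  fixes V :: "'a set" and E :: "'a \<Rightarrow> 'a \<Rightarrow> bool"
    and k :: nat and K :: "nat \<Rightarrow> 'a set"
  assumes "simple_graph V E"
    and "\<And>i. i < k \<Longrightarrow> is_clique V E (K i)"
    and "\<And>i. i < k \<Longrightarrow> card (K i) \<ge> 3"
    and "\<And>i j. i < k \<Longrightarrow> j < k \<Longrightarrow> i \<noteq> j \<Longrightarrow> clique_edges (K i) \<inter> clique_edges (K j) = {}"
  shows "real (tri_alpha V E) \<ge>
           (\<Sum>i<k. real (card (K i) choose 3) / (1 + 3 * (real (card (K i)) - 3)))"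
proof -
  have fV: "finite V" using assms(1) by (simp add: simple_graph_def)
  define X where "X i = {B. B \<subseteq> K i \<and> card B = 3}" for i
  have fK: "finite (K i)" if "i < k" for i
    using assms(2)[OF that] fV finite_subset by (auto simp: is_clique_def)
  have XT: "X i \<subseteq> triangles V E" if "i < k" for i
    using assms(2)[OF that] by (auto simp: X_def triangles_def is_clique_def)
  define P where "P i S \<longleftrightarrow> S \<subseteq> X i \<and> (\<forall>a\<in>S. \<forall>b\<in>S. \<not> tri_adj V E a b)
          \<and> card (X i) \<le> (3 * (card (K i) - 3) + 1) * card S" for i S
  have ex: "\<exists>S. S \<subseteq> X i \<and> (\<forall>a\<in>S. \<forall>b\<in>S. \<not> tri_adj V E a b)
          \<and> card (X i) \<le> (3 * (card (K i) - 3) + 1) * card S" if i: "i < k" for i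
  proof (rule greedy_indep)
    show "finite (X i)" using fK[OF i] by (simp add: X_def)
    show "tri_adj V E y x" if "tri_adj V E x y" for x y
      using that unfolding tri_adj_def by (auto simp: Int_commute)
    show "\<not> tri_adj V E x x" for x by (simp add: tri_adj_def)
    fix T assume T: "T \<in> X i"
    have "card {y \<in> X i. tri_adj V E T y} \<le>
      card {T'\<in>{B. B \<subseteq> K i \<and> card B = 3}. T' \<noteq> T \<and> (\<exists>e. e \<subseteq> T \<inter> T' \<and> card e = 2)}"
    proof (rule card_mono)
      show "finite {T'\<in>{B. B \<subseteq> K i \<and> card B = 3}. T' \<noteq> T \<and> (\<exists>e. e \<subseteq> T \<inter> T' \<and> card e = 2)}"
        using fK[OF i] by simp
      show "{y \<in> X i. tri_adj V E T y} \<subseteq>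
        {T'\<in>{B. B \<subseteq> K i \<and> card B = 3}. T' \<noteq> T \<and> (\<exists>e. e \<subseteq> T \<inter> T' \<and> card e = 2)}"
        unfolding X_def tri_adj_def by blast
    qed
    also have "\<dots> \<le> 3 * (card (K i) - 3)"
      by (rule neighbours_bound) (use T fK[OF i] in \<open>auto simp: X_def\<close>)
    finally show "card {y \<in> X i. tri_adj V E T y} \<le> 3 * (card (K i) - 3)" .
  qed
  have "\<forall>i. \<exists>S. i < k \<longrightarrow> P i S"
  proof
    fix i show "\<exists>S. i < k \<longrightarrow> P i S"
    proof (cases "i < k")
      case True
      have "\<exists>S. P i S" unfolding P_def using ex[OF True] .
      then show ?thesis using True by blast
    qed simp
  qed
  then obtain S where S0: "\<And>i. i < k \<Longrightarrow> P i (S i)"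
    by (metis choice)
  have S: "\<And>i. i < k \<Longrightarrow> S i \<subseteq> X i"
    "\<And>i. i < k \<Longrightarrow> (\<forall>a\<in>S i. \<forall>b\<in>S i. \<not> tri_adj V E a b)"
    "\<And>i. i < k \<Longrightarrow> card (X i) \<le> (3 * (card (K i) - 3) + 1) * card (S i)"
    using S0 unfolding P_def by blast+
  have edge_in: "e \<in> clique_edges (K i)" if "i < k" "T \<in> S i" "e \<subseteq> T" "card e = 2" for i T e
    using S(1)[OF that(1)] that by (auto simp: X_def clique_edges_def)
  have cross: "\<not> tri_adj V E a b" if "i < k" "j < k" "i \<noteq> j" "a \<in> S i" "b \<in> S j" for i j a b
  proof
    assume "tri_adj V E a b"
    then obtain e where "e \<subseteq> a \<inter> b" "card e = 2" by (auto simp: tri_adj_def)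
    then have "e \<in> clique_edges (K i) \<inter> clique_edges (K j)"
      using edge_in that by blast
    then show False using assms(4)[OF that(1-3)] by auto
  qed
  have disj: "S i \<inter> S j = {}" if "i < k" "j < k" "i \<noteq> j" for i j
  proof (rule ccontr)
    assume "S i \<inter> S j \<noteq> {}"
    then obtain T where T: "T \<in> S i" "T \<in> S j" by auto
    then have "card T = 3" using S(1) that by (auto simp: X_def)
    then obtain a b c where "T = {a,b,c}" "a \<noteq> b" by (auto simp: card_3_iff)
    then have "{a,b} \<subseteq> T" "card {a,b} = 2" by auto
    then have "{a,b} \<in> clique_edges (K i) \<inter> clique_edges (K j)"
      using edge_in T that by blast
    then show False using assms(4)[OF that] by auto
  qed
  define U where "U = (\<Union>i<k. S i)"
  have fX: "finite (X i)" if "i < k" for i using fK[OF that] by (simp add: X_def)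
  have fS: "finite (S i)" if "i < k" for i using fX[OF that] S(1)[OF that] finite_subset by blast
  have indU: "tri_independent V E U"
    unfolding tri_independent_def U_def
  proof (intro conjI ballI)
    show "(\<Union>i<k. S i) \<subseteq> triangles V E" using S(1) XT by blast
  next
    fix a b assume "a \<in> (\<Union>i<k. S i)" "b \<in> (\<Union>i<k. S i)"
    then obtain i j where "i < k" "j < k" "a \<in> S i" "b \<in> S j" by auto
    then show "\<not> tri_adj V E a b" using S(2) cross by (cases "i = j") auto
  qed
  have ftri: "finite (triangles V E)"
    by (rule finite_subset[of _ "Pow V"]) (use fV in \<open>auto simp: triangles_def\<close>)
  have fin: "finite {card S | S. tri_independent V E S}"
  proof -
    have "{card S | S. tri_independent V E S} \<subseteq> card ` Pow (triangles V E)"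
      by (auto simp: tri_independent_def)
    then show ?thesis using ftri finite_subset by blast
  qed
  have "card U \<le> tri_alpha V E"
    unfolding tri_alpha_def by (rule Max_ge[OF fin]) (use indU in auto)
  moreover have "card U = (\<Sum>i<k. card (S i))"
    unfolding U_def by (rule card_UN_disjoint) (use fS disj in auto)
  moreover have "real (card (K i) choose 3) / (1 + 3 * (real (card (K i)) - 3)) \<le> real (card (S i))"
    if i: "i < k" for i
  proof -
    have c: "card (X i) = card (K i) choose 3" using n_subsets[OF fK[OF i]] by (simp add: X_def)
    have s3: "card (K i) \<ge> 3" using assms(3)[OF i] .
    have a: "real (card (X i)) \<le> real ((3 * (card (K i) - 3) + 1) * card (S i))"
      using S(3)[OF i] by (simp only: of_nat_le_iff)
    have b: "real ((3 * (card (K i) - 3) + 1) * card (S i))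
        = (1 + 3 * (real (card (K i)) - 3)) * real (card (S i))"
      using s3 by (simp add: of_nat_diff algebra_simps)
    have pos: "0 < 1 + 3 * (real (card (K i)) - 3)" using s3 by simp
    have "real (card (K i) choose 3) \<le> real (card (S i)) * (1 + 3 * (real (card (K i)) - 3))"
      using a b c by (simp add: mult.commute)
    then show ?thesis by (subst pos_divide_le_eq[OF pos])
  qed
  ultimately show ?thesis
  proof -
    assume h1: "card U \<le> tri_alpha V E" and h2: "card U = (\<Sum>i<k. card (S i))"
      and h3: "\<And>i. i < k \<Longrightarrow> real (card (K i) choose 3) / (1 + 3 * (real (card (K i)) - 3)) \<le> real (card (S i))"
    have "(\<Sum>i<k. real (card (K i) choose 3) / (1 + 3 * (real (card (K i)) - 3)))
        \<le> (\<Sum>i<k. real (card (S i)))" by (rule sum_mono) (use h3 in simp)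
    also have "\<dots> = real (card U)" using h2 by simp
    also have "\<dots> \<le> real (tri_alpha V E)" using h1 by simp
    finally show ?thesis .
  qed
qed

end
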